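(* Let $f:[0,\infty)\to[0,\infty)$ be continuously differentiable with $f>0$ on $[t_0,\infty)$ for some $t_0\ge0$ and $f\in C^2([t_0,\infty))$, let $g=\log f$ on $[t_0,\infty)$, and assume condition (H1) of the context. Then for every $M>0$, $$\lim_{t\to\infty}\sup_{-M\le y\le M}\left|g\Big(t+\frac{y}{g'(t)}\Big)-g(t)-y\right|=0,$$ and in particular $$\lim_{t\to\infty}\sup_{-M\le y\le M}\left|\frac{f\big(t+\frac{y}{g'(t)}\big)}{f(t)}-e^{y}\right|=0=\lim_{t\to\infty}\sup_{-M\le y\le M}\left|\frac{f'\big(t+\frac{y}{g'(t)}\big)}{f'(t)}-e^{y}\right|.$$
   Context: Condition (H1): (i) $g'(t)>0$ and $g''(t)>0$ for all $t\ge t_0$, and there is a pair $(q,p)$ with either $q=1$ and $p\in(0,\infty]$, or $q\in(1,\infty)$ and $p\in(0,\infty)$, such that $\lim_{t\to\infty}\frac{g'(t)^2}{g(t)g''(t)}=q$ and $\lim_{t\to\infty}\frac{tg'(t)}{g(t)}=p$; (ii) if $q=1$, then $tg'(t)/g(t)$ is nondecreasing on $[t_0,\infty)$ and there exist $k\in\mathbb{N}$ and $\hat g\in C^2([t_0,\infty))$ with $f=\exp_k\circ\hat g$ and $\hat g'/\hat g$ nonincreasing on $[t_0,\infty)$ ($\exp_1=\exp$, $\exp_k=\exp_{k-1}\circ\exp$). *)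

theory Defs
  imports "HOL-Analysis.Analysis"
begin

end

theory Submission
  imports Defs
begin


lemma mvt_gen:
  fixes F F' :: "real \<Rightarrow> real"
  assumes "\<And>z. min a b \<le> z \<Longrightarrow> z \<le> max a b \<Longrightarrow> DERIV F z :> F' z"
  shows "\<exists>z. min a b \<le> z \<and> z \<le> max a b \<and> F b - F a = (b - a) * F' z"
proof (cases a b rule: linorder_cases)
  case less
  then obtain z where "a < z" "z < b" "F b - F a = (b - a) * F' z"
    using MVT2[of a b F F'] assms by force
  then show ?thesis using less by (intro exI[of _ z]) auto
next
  case equal then show ?thesis by (intro exI[of _ a]) auto
next
  case greater
  then obtain z where "b < z" "z < a" "F a - F b = (a - b) * F' z"
    using MVT2[of b a F F'] assms by force
  then show ?thesis using greater by (intro exI[of _ z]) (auto simp: algebra_simps)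
qed

lemma sup_tendsto0:
  fixes F :: "real \<Rightarrow> real \<Rightarrow> real" and M :: real
  assumes M: "M > 0"
    and ev: "\<And>e. e > 0 \<Longrightarrow> eventually (\<lambda>t. \<forall>y\<in>{-M..M}. \<bar>F t y\<bar> \<le> e) at_top"
  shows "((\<lambda>t. SUP y\<in>{-M..M}. \<bar>F t y\<bar>) \<longlongrightarrow> 0) at_top"
proof (rule tendstoI)
  fix e :: real assume e: "e > 0"
  show "eventually (\<lambda>t. dist (SUP y\<in>{-M..M}. \<bar>F t y\<bar>) 0 < e) at_top"
  proof (rule eventually_mono[OF ev[of "e/2"]])
    show "e/2 > 0" using e by simp
  next
    fix t assume H: "\<forall>y\<in>{-M..M}. \<bar>F t y\<bar> \<le> e/2"
    have ne: "{-M..M} \<noteq> {}" using M by auto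
    have le: "(SUP y\<in>{-M..M}. \<bar>F t y\<bar>) \<le> e/2"
      by (rule cSUP_least[OF ne]) (use H in auto)
    have bdd: "bdd_above ((\<lambda>y. \<bar>F t y\<bar>) ` {-M..M})"
      using H by (auto intro!: bdd_aboveI[of _ "e/2"])
    have "\<bar>F t 0\<bar> \<le> (SUP y\<in>{-M..M}. \<bar>F t y\<bar>)"
      by (rule cSUP_upper[OF _ bdd]) (use M in auto)
    then have "0 \<le> (SUP y\<in>{-M..M}. \<bar>F t y\<bar>)" by linarith
    then show "dist (SUP y\<in>{-M..M}. \<bar>F t y\<bar>) 0 < e" using le e by (simp add: dist_real_def)
  qed
qed

lemma exp_sub1_bound:
  fixes d :: real assumes "\<bar>d\<bar> \<le> 1" shows "\<bar>exp d - 1\<bar> \<le> 3 * \<bar>d\<bar>"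
proof -
  have a: "1 + d \<le> exp d" by (rule exp_ge_add_one_self)
  have "1 + (-d) \<le> exp (-d)" by (rule exp_ge_add_one_self)
  then have "exp d * (1 - d) \<le> exp d * exp (-d)" by (intro mult_left_mono) auto
  then have b: "exp d - d * exp d \<le> 1" by (simp add: exp_minus algebra_simps)
  have "exp d \<le> exp 1" using assms by auto
  then have c: "exp d \<le> 3" using exp_le by linarith
  show ?thesis
  proof (cases "d \<ge> 0")
    case True
    have "d * exp d \<le> d * 3" using c True by (intro mult_left_mono) auto
    then show ?thesis using a b True by auto
  next
    case False
    have "exp d \<le> 1" using False by auto
    then have "\<bar>exp d - 1\<bar> = 1 - exp d" by simp
    moreover have "\<bar>d\<bar> = - d" using False by simp
    ultimately show ?thesis using a False by linarith
  qed
qed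


theorem lemma2p6:
  fixes f f' f'' g g' g'' :: "real \<Rightarrow> real" and t0 M :: real
  assumes t0: "t0 \<ge> 0"
    and f_nonneg: "\<forall>t\<ge>0. f t \<ge> 0"
    and f_deriv: "\<forall>t\<ge>0. (f has_real_derivative f' t) (at t within {0..})"
    and f'_cont: "continuous_on {0..} f'"
    and f_pos: "\<forall>t\<ge>t0. f t > 0"
    and f'_deriv: "\<forall>t\<ge>t0. (f' has_real_derivative f'' t) (at t within {t0..})"
    and f''_cont: "continuous_on {t0..} f''"
    and g_def: "\<forall>t\<ge>t0. g t = ln (f t)"
    and g_deriv: "\<forall>t\<ge>t0. (g has_real_derivative g' t) (at t within {t0..})"
    and g'_deriv: "\<forall>t\<ge>t0. (g' has_real_derivative g'' t) (at t within {t0..})"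
    and H1_signs: "\<forall>t\<ge>t0. g' t > 0 \<and> g'' t > 0"
    and H1_qp:
      "(((\<lambda>t. (g' t)\<^sup>2 / (g t * g'' t)) \<longlongrightarrow> 1) at_top
         \<and> ((\<exists>p>0. ((\<lambda>t. t * g' t / g t) \<longlongrightarrow> p) at_top)
              \<or> filterlim (\<lambda>t. t * g' t / g t) at_top at_top)
         \<and> mono_on {t0..} (\<lambda>t. t * g' t / g t)
         \<and> (\<exists>k::nat. k \<ge> 1 \<and> (\<exists>gh gh' gh'' :: real \<Rightarrow> real.
               (\<forall>t\<ge>t0. (gh has_real_derivative gh' t) (at t within {t0..}))
             \<and> (\<forall>t\<ge>t0. (gh' has_real_derivative gh'' t) (at t within {t0..}))
             \<and> continuous_on {t0..} gh''
             \<and> (\<forall>t\<ge>t0. f t = (exp ^^ k) (gh t))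
             \<and> antimono_on {t0..} (\<lambda>t. gh' t / gh t))))
       \<or> (\<exists>q>1. \<exists>p>0. ((\<lambda>t. (g' t)\<^sup>2 / (g t * g'' t)) \<longlongrightarrow> q) at_top
                         \<and> ((\<lambda>t. t * g' t / g t) \<longlongrightarrow> p) at_top)"
    and M: "M > 0"
  shows "((\<lambda>t. SUP y\<in>{-M..M}. \<bar>g (t + y / g' t) - g t - y\<bar>) \<longlongrightarrow> 0) at_top
       \<and> ((\<lambda>t. SUP y\<in>{-M..M}. \<bar>f (t + y / g' t) / f t - exp y\<bar>) \<longlongrightarrow> 0) at_top
       \<and> ((\<lambda>t. SUP y\<in>{-M..M}. \<bar>f' (t + y / g' t) / f' t - exp y\<bar>) \<longlongrightarrow> 0) at_top"
proof -
  have atx: "\<And>h D x. x > t0 \<Longrightarrow> (h has_real_derivative D) (at x within {t0..}) \<Longrightarrow> (h has_real_derivative D) (at x)"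
  proof -
    fix h D x assume x: "x > t0" and d: "(h has_real_derivative D) (at x within {t0..})"
    have "at x within {t0..} = at x"
      by (rule at_within_interior) (use x interior_Ici[of "t0 - 1" t0] in auto)
    then show "(h has_real_derivative D) (at x)" using d by simp
  qed
  define T1 where "T1 = t0 + 1"
  have T1: "T1 > t0" unfolding T1_def by simp
  have dg: "\<And>x. x > t0 \<Longrightarrow> DERIV g x :> g' x" using atx g_deriv by auto
  have dg': "\<And>x. x > t0 \<Longrightarrow> DERIV g' x :> g'' x" using atx g'_deriv by auto
  have df: "\<And>x. x > t0 \<Longrightarrow> DERIV f x :> f' x"
  proof -
    fix x assume x: "x > t0"
    have "at x within {0..} = at x"
      by (rule at_within_interior) (use x t0 interior_Ici[of "- 1" "0::real"] in auto)
    then show "DERIV f x :> f' x" using f_deriv x t0 by (metis less_eq_real_def order_trans)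
  qed
  have fexp: "\<And>x. x \<ge> t0 \<Longrightarrow> f x = exp (g x)" using g_def f_pos by simp
  have g'pos: "\<And>x. x \<ge> t0 \<Longrightarrow> g' x > 0" using H1_signs by simp
  have g''pos: "\<And>x. x \<ge> t0 \<Longrightarrow> g'' x > 0" using H1_signs by simp
  have f'eq: "\<And>x. x > t0 \<Longrightarrow> f' x = f x * g' x"
  proof -
    fix x assume x: "x > t0"
    have fx: "f x > 0" using f_pos x by simp
    have "DERIV (\<lambda>x. ln (f x)) x :> f' x / f x"
      using df[OF x] fx by (auto intro!: derivative_eq_intros)
    then have "DERIV g x :> f' x / f x"
      by (rule has_field_derivative_transform_within_open[of _ _ _ "{t0<..}"]) (use x g_def in auto)
    then have "g' x = f' x / f x" using dg[OF x] DERIV_unique by blast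
    then show "f' x = f x * g' x" using fx by simp
  qed
  have mono: "\<And>a b. t0 < a \<Longrightarrow> a \<le> b \<Longrightarrow> g' a \<le> g' b"
  proof -
    fix a b assume ab: "t0 < a" "a \<le> b"
    obtain z where z: "min a b \<le> z" "z \<le> max a b" "g' b - g' a = (b - a) * g'' z"
      using mvt_gen[of a b g' g''] dg' ab by force
    have "g'' z > 0" using g''pos z ab by auto
    then have "(b - a) * g'' z \<ge> 0" using ab by (intro mult_nonneg_nonneg) auto
    then show "g' a \<le> g' b" using z by linarith
  qed
  have g_top: "filterlim g at_top at_top"
  proof (rule filterlim_at_top_mono)
    have pos: "g' T1 > 0" using g'pos T1 by simp
    show "filterlim (\<lambda>t. g T1 + (t - T1) * g' T1) at_top at_top"
      apply (rule filterlim_tendsto_add_at_top[OF tendsto_const])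
      apply (rule filterlim_at_top_mult_tendsto_pos[OF tendsto_const pos])
      apply (subst diff_conv_add_uminus, subst add.commute)
      apply (rule filterlim_tendsto_add_at_top[OF tendsto_const filterlim_ident])
      done
    show "eventually (\<lambda>t. g T1 + (t - T1) * g' T1 \<le> g t) at_top"
      using eventually_ge_at_top[of T1]
    proof (rule eventually_mono)
      fix t assume t: "T1 \<le> t"
      obtain z where z: "min T1 t \<le> z" "z \<le> max T1 t" "g t - g T1 = (t - T1) * g' z"
        using mvt_gen[of T1 t g g'] dg T1 t by force
      have "g' T1 \<le> g' z" using mono[of T1 z] T1 z t by auto
      then have "(t - T1) * g' T1 \<le> (t - T1) * g' z" using t by (intro mult_left_mono) auto
      then show "g T1 + (t - T1) * g' T1 \<le> g t" using z by linarith
    qed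
  qed
  have qex: "\<exists>q>0. ((\<lambda>t. (g' t)\<^sup>2 / (g t * g'' t)) \<longlongrightarrow> q) at_top"
    using H1_qp zero_less_one less_trans by blast
  have r0: "((\<lambda>t. g'' t / (g' t)\<^sup>2) \<longlongrightarrow> 0) at_top"
  proof -
    obtain q where q: "q > 0" "((\<lambda>t. (g' t)\<^sup>2 / (g t * g'' t)) \<longlongrightarrow> q) at_top" using qex by blast
    have "filterlim (\<lambda>t. g t * ((g' t)\<^sup>2 / (g t * g'' t))) at_top at_top"
      by (rule filterlim_at_top_mult_tendsto_pos[OF q(2) q(1) g_top])
    then have lim: "((\<lambda>t. inverse (g t * ((g' t)\<^sup>2 / (g t * g'' t)))) \<longlongrightarrow> 0) at_top"
      by (rule tendsto_inverse_0_at_top)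
    have "eventually (\<lambda>t. g t > 0 \<and> t > t0) at_top"
      using g_top by (intro eventually_conj) (auto simp: filterlim_at_top_dense eventually_gt_at_top)
    then have "eventually (\<lambda>t. inverse (g t * ((g' t)\<^sup>2 / (g t * g'' t))) = g'' t / (g' t)\<^sup>2) at_top"
    proof (rule eventually_mono)
      fix t assume "g t > 0 \<and> t > t0"
      then show "inverse (g t * ((g' t)\<^sup>2 / (g t * g'' t))) = g'' t / (g' t)\<^sup>2"
        using g'pos[of t] g''pos[of t] by (simp add: field_simps)
    qed
    then show ?thesis using lim by (rule Lim_transform_eventually[rotated])
  qed
  have main: "\<And>\<delta>. \<delta> > 0 \<Longrightarrow> \<delta> * M \<le> 1/2 \<Longrightarrow> eventually (\<lambda>t. t > t0 \<and> (\<forall>y\<in>{-M..M}.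
      t + y / g' t > t0 \<and>
      \<bar>g (t + y / g' t) - g t - y\<bar> \<le> 2 * \<delta> * M\<^sup>2 \<and>
      \<bar>g' (t + y / g' t) / g' t - 1\<bar> \<le> 2 * \<delta> * M \<and> g' (t + y / g' t) / g' t \<le> 2)) at_top"
  proof -
    fix \<delta> :: real assume \<delta>: "\<delta> > 0" "\<delta> * M \<le> 1/2"
    have "eventually (\<lambda>x. dist (g'' x / (g' x)\<^sup>2) 0 < \<delta>) at_top" using tendstoD[OF r0 \<delta>(1)] .
    then obtain N where N: "\<And>x. x \<ge> N \<Longrightarrow> \<bar>g'' x / (g' x)\<^sup>2\<bar> < \<delta>"
      unfolding eventually_at_top_linorder dist_real_def by auto
    define T where "T = max N T1"
    have TT: "T \<ge> N" "T \<ge> T1" "T > t0" unfolding T_def using T1 by auto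
    have key1: "\<And>t x. T \<le> t \<Longrightarrow> T \<le> x \<Longrightarrow> \<bar>x - t\<bar> \<le> M / g' t \<Longrightarrow>
        \<bar>g' x / g' t - 1\<bar> \<le> 2 * \<delta> * M \<and> g' x / g' t \<le> 2"
    proof -
      fix t x assume tx: "T \<le> t" "T \<le> x" "\<bar>x - t\<bar> \<le> M / g' t"
      have der: "\<And>z. min t x \<le> z \<Longrightarrow> z \<le> max t x \<Longrightarrow>
          DERIV (\<lambda>w. inverse (g' w)) z :> - (g'' z * inverse ((g' z)\<^sup>2))"
      proof -
        fix z assume "min t x \<le> z" "z \<le> max t x"
        then have z: "z > t0" using tx TT by auto
        show "DERIV (\<lambda>w. inverse (g' w)) z :> - (g'' z * inverse ((g' z)\<^sup>2))"
          using DERIV_inverse_fun[OF dg'[OF z]] g'pos[of z] z by (simp add: power2_eq_square)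
      qed
      obtain z where z: "min t x \<le> z" "z \<le> max t x"
          "inverse (g' x) - inverse (g' t) = (x - t) * (- (g'' z * inverse ((g' z)\<^sup>2)))"
        using mvt_gen[of t x "\<lambda>w. inverse (g' w)", OF der] by blast
      have "z \<ge> N" using z tx TT by auto
      then have "\<bar>g'' z * inverse ((g' z)\<^sup>2)\<bar> \<le> \<delta>"
        using N[of z] by (simp add: divide_inverse)
      then have "\<bar>inverse (g' x) - inverse (g' t)\<bar> \<le> \<bar>x - t\<bar> * \<delta>"
        unfolding z(3) abs_mult abs_minus_cancel by (intro mult_left_mono) auto
      also have "\<dots> \<le> M / g' t * \<delta>" using tx(3) \<delta> by (intro mult_right_mono) auto
      finally have ineq: "\<bar>inverse (g' x) - inverse (g' t)\<bar> \<le> M / g' t * \<delta>" .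
      have a: "g' x > 0" and b: "g' t > 0" using g'pos tx TT by auto
      define s where "s = g' t / g' x"
      have s_eq: "s - 1 = g' t * (inverse (g' x) - inverse (g' t))"
        unfolding s_def using a b by (simp add: field_simps)
      have "\<bar>s - 1\<bar> = g' t * \<bar>inverse (g' x) - inverse (g' t)\<bar>"
        unfolding s_eq abs_mult using b by simp
      also have "\<dots> \<le> g' t * (M / g' t * \<delta>)" using ineq b by (intro mult_left_mono) auto
      also have "\<dots> = \<delta> * M" using b by simp
      finally have s1: "\<bar>s - 1\<bar> \<le> \<delta> * M" .
      then have s2: "s \<ge> 1/2" using \<delta> by linarith
      have inv: "g' x / g' t = inverse s" unfolding s_def using a b by simp
      have inv2: "inverse s \<le> 2" using le_imp_inverse_le[OF s2] by simp
      have "inverse s - 1 = (1 - s) * inverse s" using s2 by (simp add: field_simps)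
      then have "\<bar>inverse s - 1\<bar> = \<bar>s - 1\<bar> * inverse s" using s2 by (simp add: abs_mult abs_minus_commute)
      also have "\<dots> \<le> (\<delta> * M) * 2" using s1 inv2 s2 \<delta> M
        by (intro mult_mono) auto
      finally show "\<bar>g' x / g' t - 1\<bar> \<le> 2 * \<delta> * M \<and> g' x / g' t \<le> 2" using inv inv2 by simp
    qed
    have gT1: "g' T1 > 0" using g'pos T1 by simp
    show "eventually (\<lambda>t. t > t0 \<and> (\<forall>y\<in>{-M..M}.
      t + y / g' t > t0 \<and>
      \<bar>g (t + y / g' t) - g t - y\<bar> \<le> 2 * \<delta> * M\<^sup>2 \<and>
      \<bar>g' (t + y / g' t) / g' t - 1\<bar> \<le> 2 * \<delta> * M \<and> g' (t + y / g' t) / g' t \<le> 2)) at_top"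
      using eventually_ge_at_top[of "T + M / g' T1"]
    proof (rule eventually_mono)
      fix t assume t: "T + M / g' T1 \<le> t"
      have MT: "M / g' T1 \<ge> 0" using M gT1 by simp
      then have tT: "t \<ge> T" using t by linarith
      have gt: "g' t \<ge> g' T1" using mono[of T1 t] T1 TT tT by auto
      have gt0: "g' t > 0" using gT1 gt by linarith
      have Mt: "M / g' t \<le> M / g' T1" using gt gT1 M by (intro divide_left_mono) auto
      show "t > t0 \<and> (\<forall>y\<in>{-M..M}.
        t + y / g' t > t0 \<and>
        \<bar>g (t + y / g' t) - g t - y\<bar> \<le> 2 * \<delta> * M\<^sup>2 \<and>
        \<bar>g' (t + y / g' t) / g' t - 1\<bar> \<le> 2 * \<delta> * M \<and> g' (t + y / g' t) / g' t \<le> 2)"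
      proof (intro conjI ballI)
        show "t > t0" using tT TT by linarith
        fix y assume y: "y \<in> {-M..M}"
        define x where "x = t + y / g' t"
        have "\<bar>y\<bar> \<le> M" using y by auto
        then have xt: "\<bar>x - t\<bar> \<le> M / g' t" unfolding x_def using gt0
          by (simp add: abs_divide divide_right_mono)
        have xT: "x \<ge> T" using xt Mt t by (auto simp: abs_if split: if_splits)
        show "t + y / g' t > t0" using xT TT unfolding x_def by linarith
        have k: "\<bar>g' x / g' t - 1\<bar> \<le> 2 * \<delta> * M \<and> g' x / g' t \<le> 2" using key1[OF tT xT xt] .
        then show "\<bar>g' (t + y / g' t) / g' t - 1\<bar> \<le> 2 * \<delta> * M" "g' (t + y / g' t) / g' t \<le> 2"
          unfolding x_def by auto
        obtain z where z: "min t x \<le> z" "z \<le> max t x" "g x - g t = (x - t) * g' z"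
          using mvt_gen[of t x g g'] dg tT xT TT by force
        have zt: "\<bar>z - t\<bar> \<le> M / g' t" using z xt by (auto simp: abs_if split: if_splits)
        have zT: "z \<ge> T" using z tT xT by auto
        have kz: "\<bar>g' z / g' t - 1\<bar> \<le> 2 * \<delta> * M" using key1[OF tT zT zt] by simp
        have "x - t = y / g' t" unfolding x_def by simp
        then have "g x - g t - y = y / g' t * g' z - y" using z(3) by simp
        also have "\<dots> = y * (g' z / g' t - 1)" using gt0 by (simp add: field_simps)
        finally have "g x - g t - y = y * (g' z / g' t - 1)" .
        then have "\<bar>g x - g t - y\<bar> = \<bar>y\<bar> * \<bar>g' z / g' t - 1\<bar>" by (simp add: abs_mult)
        also have "\<dots> \<le> M * (2 * \<delta> * M)" using y kz by (intro mult_mono) auto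
        finally show "\<bar>g (t + y / g' t) - g t - y\<bar> \<le> 2 * \<delta> * M\<^sup>2"
          unfolding x_def by (simp add: power2_eq_square algebra_simps)
      qed
    qed
  qed
  have final: "\<And>e. e > 0 \<Longrightarrow> eventually (\<lambda>t. \<forall>y\<in>{-M..M}.
      \<bar>g (t + y / g' t) - g t - y\<bar> \<le> e \<and>
      \<bar>f (t + y / g' t) / f t - exp y\<bar> \<le> e \<and>
      \<bar>f' (t + y / g' t) / f' t - exp y\<bar> \<le> e) at_top"
  proof -
    fix \<epsilon> :: real assume \<epsilon>: "\<epsilon> > 0"
    define e where "e = min \<epsilon> 1"
    have e: "e > 0" "e \<le> \<epsilon>" "e \<le> 1" unfolding e_def using \<epsilon> by auto
    define A where "A = exp M * (M\<^sup>2 + M + 1)"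
    have eM: "exp M \<ge> 1" using M by simp
    have Mpos: "M\<^sup>2 + M + 1 \<ge> 1" using M by simp
    have A_ge: "A \<ge> M\<^sup>2 + M + 1" unfolding A_def using eM Mpos
      by (metis mult_le_cancel_right1 order_trans less_le_trans zero_less_one less_le)
    have A_ge2: "A \<ge> exp M * M\<^sup>2" "A \<ge> exp M * M" unfolding A_def using M
      by (auto intro!: mult_left_mono)
    have Apos: "A > 0" using A_ge Mpos by linarith
    define \<delta> where "\<delta> = e / (20 * A)"
    have \<delta>pos: "\<delta> > 0" unfolding \<delta>_def using e Apos by simp
    have dX: "\<And>X. 0 \<le> X \<Longrightarrow> X \<le> A \<Longrightarrow> \<delta> * X \<le> e / 20"
    proof -
      fix X assume X: "0 \<le> X" "X \<le> A"
      have "e * X \<le> e * A" using X e by (intro mult_left_mono) auto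
      then show "\<delta> * X \<le> e / 20" unfolding \<delta>_def using Apos by (simp add: field_simps)
    qed
    have "M\<^sup>2 \<ge> 0" by simp
    then have MA: "M \<le> A" "M\<^sup>2 \<le> A" using A_ge M by linarith+
    have d1: "\<delta> * M \<le> e / 20" using dX[of M] MA M by simp
    have d2: "\<delta> * M\<^sup>2 \<le> e / 20" using dX[of "M\<^sup>2"] MA M by simp
    have d3: "\<delta> * (exp M * M\<^sup>2) \<le> e / 20" using dX[of "exp M * M\<^sup>2"] A_ge2 M by simp
    have d4: "\<delta> * (exp M * M) \<le> e / 20" using dX[of "exp M * M"] A_ge2 M by simp
    have dM: "\<delta> * M \<le> 1/2" using d1 e by linarith
    show "eventually (\<lambda>t. \<forall>y\<in>{-M..M}.
      \<bar>g (t + y / g' t) - g t - y\<bar> \<le> \<epsilon> \<and>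
      \<bar>f (t + y / g' t) / f t - exp y\<bar> \<le> \<epsilon> \<and>
      \<bar>f' (t + y / g' t) / f' t - exp y\<bar> \<le> \<epsilon>) at_top"
      using main[OF \<delta>pos dM]
    proof (rule eventually_mono)
      fix t assume H: "t > t0 \<and> (\<forall>y\<in>{-M..M}.
        t + y / g' t > t0 \<and>
        \<bar>g (t + y / g' t) - g t - y\<bar> \<le> 2 * \<delta> * M\<^sup>2 \<and>
        \<bar>g' (t + y / g' t) / g' t - 1\<bar> \<le> 2 * \<delta> * M \<and> g' (t + y / g' t) / g' t \<le> 2)"
      show "\<forall>y\<in>{-M..M}.
        \<bar>g (t + y / g' t) - g t - y\<bar> \<le> \<epsilon> \<and>
        \<bar>f (t + y / g' t) / f t - exp y\<bar> \<le> \<epsilon> \<and>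
        \<bar>f' (t + y / g' t) / f' t - exp y\<bar> \<le> \<epsilon>"
      proof
        fix y assume y: "y \<in> {-M..M}"
        define x where "x = t + y / g' t"
        define D where "D = g x - g t - y"
        have t: "t > t0" using H by simp
        have x: "x > t0" and HD: "\<bar>D\<bar> \<le> 2 * \<delta> * M\<^sup>2"
          and HB: "\<bar>g' x / g' t - 1\<bar> \<le> 2 * \<delta> * M" and HB2: "g' x / g' t \<le> 2"
          using H y unfolding x_def D_def by auto
        have D1: "\<bar>D\<bar> \<le> e / 10" using HD d2 by linarith
        then have D2: "\<bar>D\<bar> \<le> 1" using e by linarith
        have expy: "exp y \<le> exp M" "exp y > 0" using y by auto
        have fr: "f x / f t = exp y * exp D"
          unfolding D_def using fexp[of x] fexp[of t] x t
          by (simp add: exp_diff[symmetric] exp_add[symmetric])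
        have "\<bar>f x / f t - exp y\<bar> = exp y * \<bar>exp D - 1\<bar>"
        proof -
          have "exp y * exp D - exp y = exp y * (exp D - 1)" by (simp add: algebra_simps)
          then show ?thesis unfolding fr by (simp add: abs_mult)
        qed
        also have "\<dots> \<le> exp M * (3 * \<bar>D\<bar>)"
          using expy exp_sub1_bound[OF D2] by (intro mult_mono) auto
        also have "\<dots> \<le> exp M * (3 * (2 * \<delta> * M\<^sup>2))"
          using HD by (intro mult_left_mono) auto
        also have "\<dots> = 6 * (\<delta> * (exp M * M\<^sup>2))" by (simp add: algebra_simps)
        also have "\<dots> \<le> 6 * (e / 20)" using d3 by linarith
        finally have F1: "\<bar>f x / f t - exp y\<bar> \<le> 6 * (e / 20)" .
        define B where "B = g' x / g' t"
        have Bpos: "B > 0" unfolding B_def using g'pos x t by simp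
        have fr2: "f' x / f' t = (f x / f t) * B"
          unfolding B_def using f'eq[OF x] f'eq[OF t] f_pos x t g'pos[of x] g'pos[of t] by simp
        have "f' x / f' t - exp y = (f x / f t - exp y) * B + exp y * (B - 1)"
          unfolding fr2 by (simp add: algebra_simps)
        then have "\<bar>f' x / f' t - exp y\<bar> \<le> \<bar>f x / f t - exp y\<bar> * B + exp y * \<bar>B - 1\<bar>"
          using Bpos expy by (simp add: abs_mult order_trans[OF abs_triangle_ineq])
        also have "\<dots> \<le> (6 * (e / 20)) * 2 + exp M * (2 * \<delta> * M)"
          using F1 HB HB2 Bpos expy e unfolding B_def
          by (intro add_mono mult_mono) auto
        also have "\<dots> = 12 * (e / 20) + 2 * (\<delta> * (exp M * M))" by (simp add: algebra_simps)
        also have "\<dots> \<le> \<epsilon>" using d4 e by linarith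
        finally have F2: "\<bar>f' x / f' t - exp y\<bar> \<le> \<epsilon>" .
        show "\<bar>g (t + y / g' t) - g t - y\<bar> \<le> \<epsilon> \<and>
          \<bar>f (t + y / g' t) / f t - exp y\<bar> \<le> \<epsilon> \<and>
          \<bar>f' (t + y / g' t) / f' t - exp y\<bar> \<le> \<epsilon>"
          using D1 F1 F2 e unfolding x_def D_def by auto
      qed
    qed
  qed
  have c1: "\<And>e. e > 0 \<Longrightarrow> eventually (\<lambda>t. \<forall>y\<in>{-M..M}. \<bar>g (t + y / g' t) - g t - y\<bar> \<le> e) at_top"
    by (rule eventually_mono[OF final]) auto
  have c2: "\<And>e. e > 0 \<Longrightarrow> eventually (\<lambda>t. \<forall>y\<in>{-M..M}. \<bar>f (t + y / g' t) / f t - exp y\<bar> \<le> e) at_top"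
    by (rule eventually_mono[OF final]) auto
  have c3: "\<And>e. e > 0 \<Longrightarrow> eventually (\<lambda>t. \<forall>y\<in>{-M..M}. \<bar>f' (t + y / g' t) / f' t - exp y\<bar> \<le> e) at_top"
    by (rule eventually_mono[OF final]) auto
  show ?thesis
    using sup_tendsto0[OF M, of "\<lambda>t y. g (t + y / g' t) - g t - y", OF c1]
      sup_tendsto0[OF M, of "\<lambda>t y. f (t + y / g' t) / f t - exp y", OF c2]
      sup_tendsto0[OF M, of "\<lambda>t y. f' (t + y / g' t) / f' t - exp y", OF c3]
    by blast
qed

end
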